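(* Consider a financial exchange in which a central exchange server generates a stream of market data points and sends them over a network to release buffers, each of which delivers the data to one market participant; participants submit trades, which are sent over the network to an ordering buffer that decides the order $O$ in which trades are forwarded to the matching engine. Assume the network has finite but unbounded message latency. If the trigger points of trades are unknown to the system (the order may depend only on delivery times of market data and submission times of trades), then no ordering system can achieve Response Time Fairness.
   Context: For participant $i$ and data point $x$, $D(i,x)$ is the real time $x$ is delivered to participant $i$. For the $a$-th trade $(i,a)$ of participant $i$, $S(i,a)$ is its submission time, $TP(i,a)$ is the market data point (trigger point) in response to which it was generated, and $RT(i,a) = S(i,a) - D(i,TP(i,a))$ is its response time. $O(i,a) < O(j,b)$ means $(i,a)$ is forwarded to the matching engine before $(j,b)$. An ordering system achieves Response Time Fairness if for all trades $(i,a)$, $(j,b)$: whenever $TP(i,a) = TP(j,b)$ and $RT(i,a) < RT(j,b)$, then $O(i,a) < O(j,b)$. "Finite but unbounded latency" is the standard asynchronous message-passing model: every message is eventually delivered but there is no a priori bound on its delay. *)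

theory Defs
  imports Complex_Main
begin

text \<open>Participants have type 'p; market data points are the stream
  indexed by nat; the a-th trade of participant i is the pair (i, a).
  D i x : real time data point x is delivered to participant i.
  S i a : submission time of trade (i, a).
  TP i a : trigger point of trade (i, a).
  T : the (finite) set of trades that occur.\<close>

type_synonym 'p trade = "'p \<times> nat"

definition resp_time ::
  "('p \<Rightarrow> nat \<Rightarrow> real) \<Rightarrow> ('p \<Rightarrow> nat \<Rightarrow> real) \<Rightarrow> ('p \<Rightarrow> nat \<Rightarrow> nat) \<Rightarrow> 'p \<Rightarrow> nat \<Rightarrow> real" where
  "resp_time D S TP i a = S i a - D i (TP i a)"

text \<open>Admissible executions under finite but unbounded latency: delivery
  times are arbitrary nonnegative reals, and each trade is submitted after the
  delivery of its trigger point.\<close>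
definition valid_scenario ::
  "'p trade set \<Rightarrow> ('p \<Rightarrow> nat \<Rightarrow> real) \<Rightarrow> ('p \<Rightarrow> nat \<Rightarrow> real) \<Rightarrow> ('p \<Rightarrow> nat \<Rightarrow> nat) \<Rightarrow> bool" where
  "valid_scenario T D S TP \<longleftrightarrow> finite T \<and> (\<forall>i x. 0 \<le> D i x)
     \<and> (\<forall>(i, a) \<in> T. D i (TP i a) < S i a)"

text \<open>Response Time Fairness of the order Rel (Rel t u means t is forwarded before u).\<close>
definition RTF ::
  "'p trade set \<Rightarrow> ('p \<Rightarrow> nat \<Rightarrow> real) \<Rightarrow> ('p \<Rightarrow> nat \<Rightarrow> real) \<Rightarrow> ('p \<Rightarrow> nat \<Rightarrow> nat)
     \<Rightarrow> ('p trade \<Rightarrow> 'p trade \<Rightarrow> bool) \<Rightarrow> bool" where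
  "RTF T D S TP Rel \<longleftrightarrow> (\<forall>(i, a) \<in> T. \<forall>(j, b) \<in> T.
      TP i a = TP j b \<and> resp_time D S TP i a < resp_time D S TP j b \<longrightarrow> Rel (i, a) (j, b))"

text \<open>An ordering system that does not know trigger points: the order it
  produces depends only on the delivery times, the submission times (and the
  set of trades), and it is a strict linear order on the trades.\<close>
definition ordering_system ::
  "(('p \<Rightarrow> nat \<Rightarrow> real) \<Rightarrow> ('p \<Rightarrow> nat \<Rightarrow> real) \<Rightarrow> 'p trade set \<Rightarrow> 'p trade \<Rightarrow> 'p trade \<Rightarrow> bool) \<Rightarrow> bool" where
  "ordering_system Ord \<longleftrightarrow> (\<forall>D S T.
      (\<forall>t\<in>T. \<not> Ord D S T t t)
    \<and> (\<forall>t\<in>T. \<forall>u\<in>T. \<forall>v\<in>T. Ord D S T t u \<longrightarrow> Ord D S T u v \<longrightarrow> Ord D S T t v)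
    \<and> (\<forall>t\<in>T. \<forall>u\<in>T. t \<noteq> u \<longrightarrow> Ord D S T t u \<or> Ord D S T u t))"

end

theory Submission
  imports Defs
begin

theorem theorem1:
  fixes Ord :: "('p \<Rightarrow> nat \<Rightarrow> real) \<Rightarrow> ('p \<Rightarrow> nat \<Rightarrow> real) \<Rightarrow> 'p trade set \<Rightarrow> 'p trade \<Rightarrow> 'p trade \<Rightarrow> bool"
  assumes "\<exists>i j :: 'p. i \<noteq> j"
    and "ordering_system Ord"
  shows "\<not> (\<forall>T D S TP. valid_scenario T D S TP \<longrightarrow> RTF T D S TP (Ord D S T))"
proof
  assume H: "\<forall>T D S TP. valid_scenario T D S TP \<longrightarrow> RTF T D S TP (Ord D S T)"
  obtain i j :: 'p where ij: "i \<noteq> j" using assms(1) by blast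
  define T where "T = {(i, 0::nat), (j, 0)}"
  define D :: "'p \<Rightarrow> nat \<Rightarrow> real" where "D = (\<lambda>k x. if k = i then 2 * real x else 1)"
  define S :: "'p \<Rightarrow> nat \<Rightarrow> real" where "S = (\<lambda>k a. 3)"
  define TP0 :: "'p \<Rightarrow> nat \<Rightarrow> nat" where "TP0 = (\<lambda>k a. 0)"
  define TP1 :: "'p \<Rightarrow> nat \<Rightarrow> nat" where "TP1 = (\<lambda>k a. 1)"
  have iT: "(i, 0) \<in> T" and jT: "(j, 0) \<in> T" unfolding T_def by simp_all
  have v0: "valid_scenario T D S TP0"
    unfolding valid_scenario_def T_def D_def S_def TP0_def by simp
  have v1: "valid_scenario T D S TP1"
    unfolding valid_scenario_def T_def D_def S_def TP1_def by simp
  have r0: "RTF T D S TP0 (Ord D S T)" using H v0 by simp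
  have r1: "RTF T D S TP1 (Ord D S T)" using H v1 by simp
  have o1: "Ord D S T (j, 0) (i, 0)"
  proof -
    have "\<forall>(i', a) \<in> T. \<forall>(j', b) \<in> T.
      TP0 i' a = TP0 j' b \<and> resp_time D S TP0 i' a < resp_time D S TP0 j' b \<longrightarrow> Ord D S T (i', a) (j', b)"
      using r0 unfolding RTF_def .
    then have "TP0 j 0 = TP0 i 0 \<and> resp_time D S TP0 j 0 < resp_time D S TP0 i 0 \<longrightarrow> Ord D S T (j, 0) (i, 0)"
      using iT jT by fast
    moreover have "resp_time D S TP0 j 0 < resp_time D S TP0 i 0"
      using ij unfolding resp_time_def D_def S_def TP0_def by simp
    ultimately show ?thesis unfolding TP0_def by simp
  qed
  have o2: "Ord D S T (i, 0) (j, 0)"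
  proof -
    have "\<forall>(i', a) \<in> T. \<forall>(j', b) \<in> T.
      TP1 i' a = TP1 j' b \<and> resp_time D S TP1 i' a < resp_time D S TP1 j' b \<longrightarrow> Ord D S T (i', a) (j', b)"
      using r1 unfolding RTF_def .
    then have "TP1 i 0 = TP1 j 0 \<and> resp_time D S TP1 i 0 < resp_time D S TP1 j 0 \<longrightarrow> Ord D S T (i, 0) (j, 0)"
      using iT jT by fast
    moreover have "resp_time D S TP1 i 0 < resp_time D S TP1 j 0"
      using ij unfolding resp_time_def D_def S_def TP1_def by simp
    ultimately show ?thesis unfolding TP1_def by simp
  qed
  have os: "(\<forall>t\<in>T. \<not> Ord D S T t t)
    \<and> (\<forall>t\<in>T. \<forall>u\<in>T. \<forall>v\<in>T. Ord D S T t u \<longrightarrow> Ord D S T u v \<longrightarrow> Ord D S T t v)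
    \<and> (\<forall>t\<in>T. \<forall>u\<in>T. t \<noteq> u \<longrightarrow> Ord D S T t u \<or> Ord D S T u t)"
    using assms(2) unfolding ordering_system_def by (rule spec[of _ T, OF spec[of _ S, OF spec[of _ D]]])
  have "Ord D S T (i, 0) (i, 0)"
    using os o1 o2 iT jT by (meson)
  moreover have "\<not> Ord D S T (i, 0) (i, 0)" using os iT by meson
  ultimately show False by contradiction
qed

end
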